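(* Suppose Assumption A1 holds, and let $I=(\bar x,\bar x+\varepsilon)$ be an interval as in the conclusion of Theorem 2 (i.e. $\varepsilon>0$, $s$ is differentiable and strictly monotone on $I$, and for all $x\in I$, $|s'(x)|=f_{X\mid I}(x)/f_{s(X)\mid I}(s(x))$ with $f_{s(X)\mid I}(s(x))$ existing and nonzero). Let $\theta:=\operatorname{sgn}(s'(\bar x^+))$. Then the limit $f_{s(X)\mid I}(s(\bar x^+)):=\lim_{x\downarrow\bar x}f_{s(X)\mid I}(s(x))$ exists and is nonzero, and $$\mathrm{AME}^+_{\bar x}=m'(\bar x^+)-\theta\cdot\frac{f_{X\mid I}(\bar x^+)}{f_{s(X)\mid I}(s(\bar x^+))},$$ where $f_{X\mid I}(\bar x^+)=f_X(\bar x^+)/P(X\in I)$.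
   Context: Setting. Fix a probability space and a real number $\bar x$. For each real $x\ge\bar x$ there is a real random variable $Y(x)$; $X$ is a real random variable with $X\ge\bar x$ a.s. and $P(X=\bar x)>0$; $Y=Y(X)$. All random variables whose conditional expectations are taken are integrable; conditional expectations given $X=x$ denote fixed versions regarded as functions of $x$. Notation: for $g$ on a right neighbourhood of $\bar x$, $g(\bar x^+):=\lim_{x\downarrow\bar x}g(x)$, $g'(\bar x^+):=\lim_{x\downarrow\bar x}\frac{g(x)-g(\bar x^+)}{x-\bar x}$. For an event $S$ with $P(S)>0$, $f_{V\mid S}$ is the derivative of $v\mapsto P(V\le v\mid S)$ where it exists; $f_{X\mid I}(x)=f_X(x)/P(X\in I)$. $\operatorname{sgn}(v)=\mathbf 1(v\ge0)-\mathbf 1(v\le0)$. Definitions: $\mathrm{ATT}(x):=E[Y(x)-Y(\bar x)\mid X=x]$; $\mathrm{AME}^+_{\bar x}:=\lim_{x\downarrow\bar x}\frac{\mathrm{ATT}(x)}{x-\bar x}$; for $x>\bar x$, $m(x):=E[Y\mid X=x]-E[Y\mid X=\bar x^+]$, $s(x):=E[Y(\bar x)\mid X=x]-E[Y(\bar x)\mid X=\bar x^+]$. Assumption A1: (i) for some $\varepsilon_1>0$, $X$ has a density $f_X$ that exists and is continuous on $(\bar x,\bar x+\varepsilon_1)$, and $f_X(\bar x^+)$ exists and is strictly positive; (ii) $x\mapsto E[Y\mid X=x]$ is differentiable on $(\bar x,\bar x+\varepsilon_2)$ for some $\varepsilon_2>0$, and $E[Y\mid X=\bar x^+]$ and $\lim_{x\downarrow\bar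 x}\frac{d}{dx}E[Y\mid X=x]$ exist; (iii) $x\mapsto E[Y(\bar x)\mid X=x]$ is differentiable on $(\bar x,\bar x+\varepsilon_3)$ for some $\varepsilon_3>0$, and $\lim_{x\downarrow\bar x}\frac{d}{dx}E[Y(\bar x)\mid X=x]$ exists and is nonzero; (iv) $\mathrm{ATT}(\bar x^+)=0$ and $\mathrm{ATT}'(\bar x^+)$ exists. *)

theory Defs
  imports "HOL-Probability.Probability"
begin

definition rlim :: "(real \<Rightarrow> real) \<Rightarrow> real \<Rightarrow> real" where
  "rlim g x0 = Lim (at_right x0) g"

definition rderiv :: "(real \<Rightarrow> real) \<Rightarrow> real \<Rightarrow> real" where
  "rderiv g x0 = Lim (at_right x0) (\<lambda>x. (g x - rlim g x0) / (x - x0))"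

text \<open>g is a (fixed) version of x \<mapsto> E[V | X = x]: a Borel function with
  g(X) a version of E[V | sigma(X)].\<close>
definition is_cond_exp_fun ::
  "'a measure \<Rightarrow> ('a \<Rightarrow> real) \<Rightarrow> ('a \<Rightarrow> real) \<Rightarrow> (real \<Rightarrow> real) \<Rightarrow> bool" where
  "is_cond_exp_fun M X V g \<longleftrightarrow>
     g \<in> borel_measurable borel \<and> integrable M (\<lambda>\<omega>. g (X \<omega>)) \<and>
     (\<forall>A \<in> sets borel.
        (LINT \<omega>:(X -` A \<inter> space M)|M. V \<omega>) = (LINT \<omega>:(X -` A \<inter> space M)|M. g (X \<omega>)))"

end

theory Submission
  imports Defs
begin

lemma rlim_eq: "(g \<longlongrightarrow> L) (at_right (a::real)) \<Longrightarrow> rlim g a = L"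
  unfolding rlim_def by (rule tendsto_Lim) (simp_all add: trivial_limit_at_right_real)

lemma lhop_aux:
  fixes h :: "real \<Rightarrow> real"
  assumes d: "d > 0" and diff: "\<And>x. x \<in> {a<..<a+d} \<Longrightarrow> h differentiable (at x)"
    and hl: "(h \<longlongrightarrow> L) (at_right a)" and dl: "(deriv h \<longlongrightarrow> D) (at_right a)"
  shows "((\<lambda>x. (h x - L) / (x - a)) \<longlongrightarrow> D) (at_right a)"
proof (rule lhopital_right[where f'="deriv h" and g'="\<lambda>_. 1"])
  show "((\<lambda>x. h x - L) \<longlongrightarrow> 0) (at_right a)"
    using tendsto_diff[OF hl tendsto_const[of L]] by simp
  show "((\<lambda>x. x - a) \<longlongrightarrow> 0) (at_right a)"
    by (rule tendsto_eq_intros refl | simp)+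
  show "\<forall>\<^sub>F x in at_right a. x - a \<noteq> 0"
    using eventually_at_right_real[of a "a+d"] d by (auto elim: eventually_mono)
  show "\<forall>\<^sub>F x in at_right a. (1::real) \<noteq> 0" by simp
  show "\<forall>\<^sub>F x in at_right a. ((\<lambda>x. h x - L) has_real_derivative deriv h x) (at x)"
    using eventually_at_right_real[of a "a+d"] d
    by (auto elim!: eventually_mono intro!: derivative_eq_intros
        simp: DERIV_deriv_iff_real_differentiable diff)
  show "\<forall>\<^sub>F x in at_right a. ((\<lambda>x. x - a) has_real_derivative 1) (at x)"
    by (rule always_eventually) (auto intro!: derivative_eq_intros)
  show "((\<lambda>x. deriv h x / 1) \<longlongrightarrow> D) (at_right a)" using dl by simp
qed

theorem theorem3:
  fixes M :: "'a measure"
    and X :: "'a \<Rightarrow> real"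
    and Yp :: "real \<Rightarrow> 'a \<Rightarrow> real"
    and xbar :: real
    and muY :: "real \<Rightarrow> real"
    and cY :: "real \<Rightarrow> real \<Rightarrow> real"
    and fX fS :: "real \<Rightarrow> real"
    and \<epsilon> \<epsilon>1 \<epsilon>2 \<epsilon>3 :: real
  defines "Y \<equiv> (\<lambda>\<omega>. Yp (X \<omega>) \<omega>)"
    and "ATT \<equiv> (\<lambda>x. cY x x - cY xbar x)"
    and "m \<equiv> (\<lambda>x. muY x - rlim muY xbar)"
    and "s \<equiv> (\<lambda>x. cY xbar x - rlim (cY xbar) xbar)"
    and "I \<equiv> {xbar<..<xbar + \<epsilon>}"
    and "PI \<equiv> measure M {\<omega> \<in> space M. X \<omega> \<in> {xbar<..<xbar + \<epsilon>}}"
  assumes M: "prob_space M"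
    and X_rv: "X \<in> borel_measurable M"
    and X_ge: "AE \<omega> in M. X \<omega> \<ge> xbar"
    and X_atom: "measure M {\<omega> \<in> space M. X \<omega> = xbar} > 0"
    and Yp_int: "\<And>x. x \<ge> xbar \<Longrightarrow> integrable M (Yp x)"
    and Y_int: "integrable M Y"
    and muY_ce: "is_cond_exp_fun M X Y muY"
    and cY_ce: "\<And>x. x \<ge> xbar \<Longrightarrow> is_cond_exp_fun M X (Yp x) (cY x)"
    and consist: "\<And>x. x > xbar \<Longrightarrow> muY x = cY x x"
    \<comment> \<open>A1 (i)\<close>
    and e1: "\<epsilon>1 > 0"
    and dens: "\<And>x. x \<in> {xbar<..<xbar + \<epsilon>1} \<Longrightarrow>
        ((\<lambda>t. measure M {\<omega> \<in> space M. X \<omega> \<le> t}) has_real_derivative fX x) (at x)"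
    and fX_cont: "continuous_on {xbar<..<xbar + \<epsilon>1} fX"
    and fX_lim: "\<exists>L. (fX \<longlongrightarrow> L) (at_right xbar) \<and> L > 0"
    \<comment> \<open>A1 (ii)\<close>
    and e2: "\<epsilon>2 > 0"
    and muY_diff: "\<And>x. x \<in> {xbar<..<xbar + \<epsilon>2} \<Longrightarrow> muY differentiable (at x)"
    and muY_lim: "\<exists>L. (muY \<longlongrightarrow> L) (at_right xbar)"
    and muY_dlim: "\<exists>L. ((\<lambda>x. deriv muY x) \<longlongrightarrow> L) (at_right xbar)"
    \<comment> \<open>A1 (iii)\<close>
    and e3: "\<epsilon>3 > 0"
    and mu0_diff: "\<And>x. x \<in> {xbar<..<xbar + \<epsilon>3} \<Longrightarrow> cY xbar differentiable (at x)"
    and mu0_dlim: "\<exists>L. ((\<lambda>x. deriv (cY xbar) x) \<longlongrightarrow> L) (at_right xbar) \<and> L \<noteq> 0"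
    \<comment> \<open>A1 (iv)\<close>
    and ATT_lim: "(ATT \<longlongrightarrow> 0) (at_right xbar)"
    and ATT_dlim: "\<exists>L. ((\<lambda>x. (ATT x - rlim ATT xbar) / (x - xbar)) \<longlongrightarrow> L) (at_right xbar)"
    \<comment> \<open>The interval I from Theorem 2\<close>
    and e: "\<epsilon> > 0"
    and s_diff: "\<And>x. x \<in> I \<Longrightarrow> s differentiable (at x)"
    and s_mono: "(\<forall>x\<in>I. \<forall>y\<in>I. x < y \<longrightarrow> s x < s y) \<or> (\<forall>x\<in>I. \<forall>y\<in>I. x < y \<longrightarrow> s x > s y)"
    and fS_dens: "\<And>x. x \<in> I \<Longrightarrow>
        ((\<lambda>v. measure M {\<omega> \<in> space M. s (X \<omega>) \<le> v \<and> X \<omega> \<in> I} / PI)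
           has_real_derivative fS (s x)) (at (s x))"
    and fS_nz: "\<And>x. x \<in> I \<Longrightarrow> fS (s x) \<noteq> 0"
    and s_eq: "\<And>x. x \<in> I \<Longrightarrow> \<bar>deriv s x\<bar> = (fX x / PI) / fS (s x)"
  shows "(\<exists>L. ((\<lambda>x. fS (s x)) \<longlongrightarrow> L) (at_right xbar) \<and> L \<noteq> 0) \<and>
         Lim (at_right xbar) (\<lambda>x. ATT x / (x - xbar))
           = rderiv m xbar - sgn (rderiv s xbar) * ((rlim fX xbar / PI) / rlim (\<lambda>x. fS (s x)) xbar)"
proof -
  obtain Lmu where Lmu: "(muY \<longlongrightarrow> Lmu) (at_right xbar)" using muY_lim by blast
  obtain Dmu where Dmu: "(deriv muY \<longlongrightarrow> Dmu) (at_right xbar)" using muY_dlim by blast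
  obtain D0 where D0: "(deriv (cY xbar) \<longlongrightarrow> D0) (at_right xbar)" and D0nz: "D0 \<noteq> 0"
    using mu0_dlim by blast
  obtain LX where LX: "(fX \<longlongrightarrow> LX) (at_right xbar)" and LXpos: "LX > 0" using fX_lim by blast
  have evgt: "\<forall>\<^sub>F x in at_right xbar. x > xbar"
    by (simp add: eventually_at_right_less)
  have ev: "\<forall>\<^sub>F x in at_right xbar. x \<in> {xbar<..<xbar + min \<epsilon> \<epsilon>3}"
    by (rule eventually_at_right_real) (use e e3 in simp)
  have ATTeq: "\<forall>\<^sub>F x in at_right xbar. ATT x = muY x - cY xbar x"
    using evgt by (auto elim!: eventually_mono simp: ATT_def consist)
  have cYl: "(cY xbar \<longlongrightarrow> Lmu) (at_right xbar)"
  proof -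
    have "((\<lambda>x. muY x - ATT x) \<longlongrightarrow> Lmu - 0) (at_right xbar)"
      by (intro tendsto_diff Lmu ATT_lim)
    moreover have "\<forall>\<^sub>F x in at_right xbar. muY x - ATT x = cY xbar x"
      using ATTeq by (auto elim!: eventually_mono)
    ultimately show ?thesis by (simp add: tendsto_cong)
  qed
  have rmu: "rlim muY xbar = Lmu" by (rule rlim_eq[OF Lmu])
  have rc: "rlim (cY xbar) xbar = Lmu" by (rule rlim_eq[OF cYl])
  have mlim: "(m \<longlongrightarrow> 0) (at_right xbar)"
    unfolding m_def rmu using tendsto_diff[OF Lmu tendsto_const[of Lmu]] by simp
  have slim: "(s \<longlongrightarrow> 0) (at_right xbar)"
    unfolding s_def rc using tendsto_diff[OF cYl tendsto_const[of Lmu]] by simp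
  have qmu: "((\<lambda>x. (muY x - Lmu) / (x - xbar)) \<longlongrightarrow> Dmu) (at_right xbar)"
    by (rule lhop_aux[OF e2 muY_diff Lmu Dmu]) auto
  have qc: "((\<lambda>x. (cY xbar x - Lmu) / (x - xbar)) \<longlongrightarrow> D0) (at_right xbar)"
    by (rule lhop_aux[OF e3 mu0_diff cYl D0]) auto
  have rm: "rderiv m xbar = Dmu"
    unfolding rderiv_def rlim_eq[OF mlim] using qmu
    by (intro tendsto_Lim) (simp_all add: trivial_limit_at_right_real m_def rmu)
  have rs: "rderiv s xbar = D0"
    unfolding rderiv_def rlim_eq[OF slim] using qc
    by (intro tendsto_Lim) (simp_all add: trivial_limit_at_right_real s_def rc)
  have Alim: "((\<lambda>x. ATT x / (x - xbar)) \<longlongrightarrow> Dmu - D0) (at_right xbar)"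
  proof -
    have "((\<lambda>x. (muY x - Lmu) / (x - xbar) - (cY xbar x - Lmu) / (x - xbar)) \<longlongrightarrow> Dmu - D0) (at_right xbar)"
      by (intro tendsto_diff qmu qc)
    moreover have "\<forall>\<^sub>F x in at_right xbar. (muY x - Lmu) / (x - xbar) - (cY xbar x - Lmu) / (x - xbar) = ATT x / (x - xbar)"
      using ATTeq evgt by eventually_elim (simp add: diff_divide_distrib)
    ultimately show ?thesis by (simp add: tendsto_cong)
  qed
  have ALim: "Lim (at_right xbar) (\<lambda>x. ATT x / (x - xbar)) = Dmu - D0"
    by (rule tendsto_Lim[OF _ Alim]) (simp add: trivial_limit_at_right_real)
  have dseq: "\<forall>\<^sub>F x in at_right xbar. deriv s x = deriv (cY xbar) x"
    using ev
  proof eventually_elim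
    case (elim x)
    then have "cY xbar differentiable (at x)" using mu0_diff by auto
    then have "DERIV (cY xbar) x :> deriv (cY xbar) x"
      by (simp add: DERIV_deriv_iff_real_differentiable)
    then have "DERIV s x :> deriv (cY xbar) x"
      unfolding s_def by (auto intro!: derivative_eq_intros)
    then show ?case by (rule DERIV_imp_deriv)
  qed
  have dslim: "((\<lambda>x. \<bar>deriv s x\<bar>) \<longlongrightarrow> \<bar>D0\<bar>) (at_right xbar)"
  proof -
    have "((\<lambda>x. \<bar>deriv (cY xbar) x\<bar>) \<longlongrightarrow> \<bar>D0\<bar>) (at_right xbar)"
      by (intro tendsto_rabs D0)
    moreover have "\<forall>\<^sub>F x in at_right xbar. \<bar>deriv (cY xbar) x\<bar> = \<bar>deriv s x\<bar>"
      using dseq by (auto elim!: eventually_mono)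
    ultimately show ?thesis by (simp add: tendsto_cong)
  qed
  have evI: "\<forall>\<^sub>F x in at_right xbar. x \<in> I"
    unfolding I_def by (rule eventually_at_right_real) (use e in simp)
  have PInz: "PI \<noteq> 0"
  proof
    assume P0: "PI = 0"
    have "\<forall>\<^sub>F x in at_right xbar. \<bar>deriv s x\<bar> = 0"
      using evI by (auto elim!: eventually_mono dest: s_eq simp: P0)
    then have "((\<lambda>x. \<bar>deriv s x\<bar>) \<longlongrightarrow> 0) (at_right xbar)"
      by (rule tendsto_eventually)
    with dslim have "\<bar>D0\<bar> = 0"
      using tendsto_unique trivial_limit_at_right_real by blast
    with D0nz show False by simp
  qed
  have evpos: "\<forall>\<^sub>F x in at_right xbar. \<bar>deriv s x\<bar> > 0"
    using order_tendstoD(1)[OF dslim, of 0] D0nz by simp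
  have fSeq: "\<forall>\<^sub>F x in at_right xbar. (fX x / PI) / \<bar>deriv s x\<bar> = fS (s x)"
    using evI evpos
  proof eventually_elim
    case (elim x)
    have "\<bar>deriv s x\<bar> = (fX x / PI) / fS (s x)" using s_eq elim by blast
    then show ?case using elim fS_nz[OF elim(1)] PInz by (auto simp: field_simps)
  qed
  have fSlim: "((\<lambda>x. fS (s x)) \<longlongrightarrow> (LX / PI) / \<bar>D0\<bar>) (at_right xbar)"
  proof -
    have "((\<lambda>x. (fX x / PI) / \<bar>deriv s x\<bar>) \<longlongrightarrow> (LX / PI) / \<bar>D0\<bar>) (at_right xbar)"
      by (intro tendsto_divide LX tendsto_const dslim) (use D0nz PInz in simp_all)
    then show ?thesis using fSeq by (simp add: tendsto_cong)
  qed
  have nz: "(LX / PI) / \<bar>D0\<bar> \<noteq> 0" using PInz LXpos D0nz by simp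
  have rfX: "rlim fX xbar = LX" by (rule rlim_eq[OF LX])
  have rfS: "rlim (\<lambda>x. fS (s x)) xbar = (LX / PI) / \<bar>D0\<bar>" by (rule rlim_eq[OF fSlim])
  have fin: "Dmu - D0 = Dmu - sgn D0 * ((LX / PI) / ((LX / PI) / \<bar>D0\<bar>))"
    using PInz LXpos D0nz by (simp add: sgn_mult_abs)
  show ?thesis
    using fSlim nz ALim rm rs rfX rfS fin by auto
qed

end
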